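(* Let $(\Gamma(-),X)$ be a finite graph of finite groups with fundamental group $\Gamma=\pi_1(\Gamma(-),X)$, and let $T$ be a maximal (spanning) tree of $X$ such that \[ \Gamma(e)^e\neq\Gamma(t(e))\quad\text{and}\quad\Gamma(e)^{\bar e}\neq\Gamma(o(e))\qquad\text{for all } e\in E(T). \] Then the number $|E(X)|$ of (directed) edges of $X$ satisfies $|E(X)|\le 2\mu(\Gamma)$.
   Context: Graphs are in the sense of Serre: vertex set $V(X)$, set $E(X)$ of directed edges with fixed-point-free involution $e\mapsto\bar e$, maps $o,t:E(X)\to V(X)$ with $t(\bar e)=o(e)$. A graph of groups assigns groups $\Gamma(v)$, $\Gamma(e)=\Gamma(\bar e)$ and monomorphisms $\Gamma(e)\to\Gamma(t(e))$, $a\mapsto a^e$; $\Gamma(e)^e\le\Gamma(t(e))$ and $\Gamma(e)^{\bar e}\le\Gamma(o(e))$ denote the images. $\Gamma$ is then a finitely generated virtually free group. Let $m_\Gamma$ be the least common multiple of the orders of the finite subgroups of $\Gamma$ (equivalently $\operatorname{lcm}\{|\Gamma(v)|:v\in V(X)\}$). The free rank $\mu(\Gamma)$ is the rank of a free subgroup of index $m_\Gamma$ in $\Gamma$; equivalently $\mu(\Gamma)=1-m_\Gamma\chi(\Gamma)$ where $\chi(\Gamma)=\sum_{v\in V(X)}|\Gamma(v)|^{-1}-\sum_{e\in\mathcal O(X)}|\Gamma(e)|^{-1}$ for any orientation $\mathcal O(X)$ (one edge chosen from each pair $\{e,\bar e\}$). *)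

theory Defs
  imports Complex_Main "HOL-Algebra.Coset"
begin

definition serre_graph ::
  "'v set \<Rightarrow> 'e set \<Rightarrow> ('e \<Rightarrow> 'e) \<Rightarrow> ('e \<Rightarrow> 'v) \<Rightarrow> ('e \<Rightarrow> 'v) \<Rightarrow> bool" where
  "serre_graph V E bar src tgt \<longleftrightarrow>
     (\<forall>e\<in>E. bar e \<in> E \<and> bar (bar e) = e \<and> bar e \<noteq> e \<and>
             src e \<in> V \<and> tgt e \<in> V \<and> tgt (bar e) = src e)"

fun is_path :: "'e set \<Rightarrow> ('e \<Rightarrow> 'v) \<Rightarrow> ('e \<Rightarrow> 'v) \<Rightarrow> 'v \<Rightarrow> 'e list \<Rightarrow> 'v \<Rightarrow> bool" where
  "is_path F src tgt u [] w \<longleftrightarrow> u = w"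
| "is_path F src tgt u (e # es) w \<longleftrightarrow> e \<in> F \<and> src e = u \<and> is_path F src tgt (tgt e) es w"

fun reduced :: "('e \<Rightarrow> 'e) \<Rightarrow> 'e list \<Rightarrow> bool" where
  "reduced bar (e1 # e2 # es) \<longleftrightarrow> e2 \<noteq> bar e1 \<and> reduced bar (e2 # es)"
| "reduced bar _ \<longleftrightarrow> True"

definition spanning_tree ::
  "'v set \<Rightarrow> 'e set \<Rightarrow> ('e \<Rightarrow> 'e) \<Rightarrow> ('e \<Rightarrow> 'v) \<Rightarrow> ('e \<Rightarrow> 'v) \<Rightarrow> 'e set \<Rightarrow> bool" where
  "spanning_tree V E bar src tgt T \<longleftrightarrow>
     T \<subseteq> E \<and> (\<forall>e\<in>T. bar e \<in> T) \<and>
     (\<forall>u\<in>V. \<forall>w\<in>V. \<exists>es. is_path T src tgt u es w) \<and>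
     (\<forall>u\<in>V. \<forall>es. is_path T src tgt u es u \<and> reduced bar es \<longrightarrow> es = [])"

text \<open>A finite graph of finite groups: vertex groups Gv v, edge groups Ge e with Ge (bar e) = Ge e,
  and monomorphisms phi e : Ge e \<rightarrow> Gv (tgt e), a \<mapsto> a^e.\<close>

definition finite_graph_of_finite_groups ::
  "'v set \<Rightarrow> 'e set \<Rightarrow> ('e \<Rightarrow> 'e) \<Rightarrow> ('e \<Rightarrow> 'v) \<Rightarrow> ('e \<Rightarrow> 'v)
   \<Rightarrow> ('v \<Rightarrow> 'a monoid) \<Rightarrow> ('e \<Rightarrow> 'a monoid) \<Rightarrow> ('e \<Rightarrow> 'a \<Rightarrow> 'a) \<Rightarrow> bool" where
  "finite_graph_of_finite_groups V E bar src tgt Gv Ge phi \<longleftrightarrow>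
     serre_graph V E bar src tgt \<and> finite V \<and> finite E \<and> V \<noteq> {} \<and>
     (\<forall>v\<in>V. group (Gv v) \<and> finite (carrier (Gv v))) \<and>
     (\<forall>e\<in>E. group (Ge e) \<and> finite (carrier (Ge e)) \<and> Ge (bar e) = Ge e \<and>
             phi e \<in> hom (Ge e) (Gv (tgt e)) \<and> inj_on (phi e) (carrier (Ge e)))"

text \<open>Euler characteristic chi(Gamma) = sum_v 1/|Gamma(v)| - sum_{e in orientation} 1/|Gamma(e)|.
  Since |Gamma(e)| = |Gamma(bar e)|, the sum over an orientation is half the sum over all edges.\<close>

definition euler_char :: "'v set \<Rightarrow> 'e set \<Rightarrow> ('v \<Rightarrow> 'a monoid) \<Rightarrow> ('e \<Rightarrow> 'a monoid) \<Rightarrow> real" where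
  "euler_char V E Gv Ge =
     (\<Sum>v\<in>V. 1 / real (order (Gv v))) - (\<Sum>e\<in>E. 1 / real (order (Ge e))) / 2"

definition m_Gamma :: "'v set \<Rightarrow> ('v \<Rightarrow> 'a monoid) \<Rightarrow> nat" where
  "m_Gamma V Gv = Lcm ((\<lambda>v. order (Gv v)) ` V)"

definition free_rank :: "'v set \<Rightarrow> 'e set \<Rightarrow> ('v \<Rightarrow> 'a monoid) \<Rightarrow> ('e \<Rightarrow> 'a monoid) \<Rightarrow> real" where
  "free_rank V E Gv Ge = 1 - real (m_Gamma V Gv) * euler_char V E Gv Ge"

end

theory Submission
  imports Defs "HOL-Algebra.Coset"
begin
lemma sub_card:
  assumes "group H" "group G" "finite (carrier G)" "h \<in> hom H G" "inj_on h (carrier H)"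
  shows "order H dvd order G" "h ` carrier H \<noteq> carrier G \<Longrightarrow> 2 * order H \<le> order G"
proof -
  have gh: "group_hom H G h" using assms by (simp add: group_hom_def group_hom_axioms_def)
  have sg: "subgroup (h ` carrier H) G" using group_hom.img_is_subgroup[OF gh] .
  have ci: "card (h ` carrier H) = order H" using assms(5) by (simp add: card_image order_def)
  obtain c where c: "c * order H = order G"
    using group.lagrange[OF assms(2) sg] ci by metis
  then show "order H dvd order G" by (metis dvd_triv_right)
  assume ne: "h ` carrier H \<noteq> carrier G"
  have "h ` carrier H \<subseteq> carrier G" using sg subgroup.subset by blast
  hence "card (h ` carrier H) < order G" using ne assms(3) unfolding order_def
    by (meson psubsetI psubset_card_mono)
  hence "c \<noteq> 1" using c ci by auto
  moreover have "c \<noteq> 0"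
  proof
    assume "c = 0" thus False using c ci \<open>card (h ` carrier H) < order G\<close> by simp
  qed
  ultimately have "c \<ge> 2" by auto
  thus "2 * order H \<le> order G" using c by (metis mult_le_mono1)
qed

lemma is_path_append:
  "is_path F src tgt u (xs @ ys) w \<longleftrightarrow> (\<exists>z. is_path F src tgt u xs z \<and> is_path F src tgt z ys w)"
  by (induction xs arbitrary: u) auto

theorem lemma5p1:
  fixes V :: "'v set" and E :: "'e set" and bar :: "'e \<Rightarrow> 'e" and src tgt :: "'e \<Rightarrow> 'v"
    and Gv :: "'v \<Rightarrow> 'a monoid" and Ge :: "'e \<Rightarrow> 'a monoid" and phi :: "'e \<Rightarrow> 'a \<Rightarrow> 'a"
    and T :: "'e set"
  assumes "finite_graph_of_finite_groups V E bar src tgt Gv Ge phi"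
    and "spanning_tree V E bar src tgt T"
    and "\<forall>e\<in>T. phi e ` carrier (Ge e) \<noteq> carrier (Gv (tgt e)) \<and>
               phi (bar e) ` carrier (Ge e) \<noteq> carrier (Gv (src e))"
  shows "real (card E) \<le> 2 * free_rank V E Gv Ge"
proof -
  note A = assms(1)[unfolded finite_graph_of_finite_groups_def]
  note S = A[THEN conjunct1, unfolded serre_graph_def]
  note ST = assms(2)[unfolded spanning_tree_def]
  have finV: "finite V" and finE: "finite E" and Vne: "V \<noteq> {}" using A by auto
  have TE: "T \<subseteq> E" and Tbar: "\<And>e. e \<in> T \<Longrightarrow> bar e \<in> T" using ST by auto
  have conn: "\<And>u w. u \<in> V \<Longrightarrow> w \<in> V \<Longrightarrow> \<exists>es. is_path T src tgt u es w" using ST by auto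
  have Ebar: "\<And>e. e \<in> E \<Longrightarrow> bar e \<in> E \<and> bar (bar e) = e \<and> src e \<in> V \<and> tgt e \<in> V \<and> tgt (bar e) = src e"
    using S by auto
  define M where "M = m_Gamma V Gv"
  define n where "n v = real (order (Gv v))" for v
  define k where "k e = real (order (Ge e))" for e
  define a where "a v = real M / n v" for v
  define b where "b e = real M / k e" for e
  have grpV: "\<And>v. v \<in> V \<Longrightarrow> group (Gv v) \<and> finite (carrier (Gv v))" using A by auto
  have grpE: "\<And>e. e \<in> E \<Longrightarrow> group (Ge e) \<and> finite (carrier (Ge e)) \<and> Ge (bar e) = Ge e \<and>
             phi e \<in> hom (Ge e) (Gv (tgt e)) \<and> inj_on (phi e) (carrier (Ge e))" using A by auto
  have ordV: "\<And>v. v \<in> V \<Longrightarrow> order (Gv v) > 0"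
    using grpV by (meson group.is_monoid monoid.order_gt_0_iff_finite)
  have ordE: "\<And>e. e \<in> E \<Longrightarrow> order (Ge e) > 0"
    using grpE by (meson group.is_monoid monoid.order_gt_0_iff_finite)
  have dvdM: "\<And>v. v \<in> V \<Longrightarrow> order (Gv v) dvd M" unfolding M_def m_Gamma_def by (simp add: dvd_Lcm)
  have Mpos: "M > 0" 
  proof -
    have "Lcm ((\<lambda>v. order (Gv v)) ` V) \<noteq> 0" using finV ordV
      by (subst Lcm_0_iff) (auto simp: image_iff)
    thus ?thesis unfolding M_def m_Gamma_def by simp
  qed
  have a1: "\<And>v. v \<in> V \<Longrightarrow> a v \<ge> 1"
  proof -
    fix v assume v: "v \<in> V"
    have "order (Gv v) \<le> M" using dvdM[OF v] Mpos by (simp add: dvd_imp_le)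
    thus "a v \<ge> 1" using ordV[OF v] unfolding a_def n_def by simp
  qed
  have kle: "\<And>e. e \<in> E \<Longrightarrow> order (Ge e) \<le> order (Gv (tgt e))"
  proof -
    fix e assume e: "e \<in> E"
    have "order (Ge e) dvd order (Gv (tgt e))"
      using sub_card(1)[of "Ge e" "Gv (tgt e)" "phi e"] grpE[OF e] grpV Ebar[OF e] by auto
    thus "order (Ge e) \<le> order (Gv (tgt e))" using ordV Ebar[OF e] by (simp add: dvd_imp_le)
  qed
  have b_ge_a: "\<And>e. e \<in> E \<Longrightarrow> b e \<ge> a (tgt e)"
  proof -
    fix e assume e: "e \<in> E"
    have "real (order (Ge e)) \<le> real (order (Gv (tgt e)))" using kle[OF e] by simp
    thus "b e \<ge> a (tgt e)" unfolding a_def b_def n_def k_def using ordE[OF e] Mpos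
      by (simp add: frac_le)
  qed
  have b1: "\<And>e. e \<in> E \<Longrightarrow> b e \<ge> 1" using b_ge_a a1 Ebar by (meson order_trans)
  have bbar: "\<And>e. e \<in> E \<Longrightarrow> b (bar e) = b e" using grpE unfolding b_def k_def by auto
  have bT: "\<And>e. e \<in> T \<Longrightarrow> b e \<ge> 2 * a (tgt e)"
  proof -
    fix e assume eT: "e \<in> T"
    have e: "e \<in> E" using eT TE by auto
    have "2 * order (Ge e) \<le> order (Gv (tgt e))"
      using sub_card(2)[of "Ge e" "Gv (tgt e)" "phi e"] grpE[OF e] grpV Ebar[OF e] assms(3) eT by auto
    hence "2 * real (order (Ge e)) \<le> real (order (Gv (tgt e)))" by linarith
    hence "real M / real (order (Ge e)) \<ge> real M / (real (order (Gv (tgt e))) / 2)"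
      using ordE[OF e] Mpos by (intro divide_left_mono) auto
    thus "b e \<ge> 2 * a (tgt e)" unfolding a_def b_def n_def k_def by (simp add: mult.commute)
  qed
  have bT2: "\<And>e. e \<in> T \<Longrightarrow> b e \<ge> 2 * a (src e)"
  proof -
    fix e assume eT: "e \<in> T"
    have "b (bar e) \<ge> 2 * a (tgt (bar e))" using bT Tbar eT by blast
    thus "b e \<ge> 2 * a (src e)" using bbar Ebar eT TE by auto
  qed
  obtain r where r: "r \<in> V" using Vne by auto
  define W where "W = V - {r}"
  have key: "(\<Sum>e\<in>E. b e - 1) \<ge> 2 * (\<Sum>v\<in>V. a v) - 2"
  proof (cases "W = {}")
    case True
    hence Vr: "V = {r}" using r W_def by auto
    have "M = order (Gv r)" unfolding M_def m_Gamma_def Vr by simp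
    hence "a r = 1" unfolding a_def n_def using ordV[OF r] by simp
    moreover have "(\<Sum>e\<in>E. b e - 1) \<ge> 0" using b1 by (simp add: sum_nonneg)
    ultimately show ?thesis using Vr by simp
  next
    case False
    define d where "d v = (LEAST l. \<exists>es. is_path T src tgt r es v \<and> length es = l)" for v
    have dex: "\<And>v. v \<in> V \<Longrightarrow> \<exists>es. is_path T src tgt r es v \<and> length es = d v"
    proof -
      fix v assume v: "v \<in> V"
      obtain es where "is_path T src tgt r es v" using conn r v by blast
      thus "\<exists>es. is_path T src tgt r es v \<and> length es = d v"
      proof -
        assume "is_path T src tgt r es v"
        hence "\<exists>l. \<exists>es. is_path T src tgt r es v \<and> length es = l" by blast
        thus ?thesis unfolding d_def by (rule LeastI_ex)
      qed
    qed
    have dle: "\<And>v es. is_path T src tgt r es v \<Longrightarrow> d v \<le> length es"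
      unfolding d_def by (rule Least_le) blast
    have "\<forall>v\<in>W. \<exists>e. e \<in> T \<and> tgt e = v \<and> d (src e) + 1 = d v"
    proof
      fix v assume vW: "v \<in> W"
      hence v: "v \<in> V" "v \<noteq> r" using W_def by auto
      obtain es where es: "is_path T src tgt r es v" "length es = d v" using dex v by blast
      have "es \<noteq> []" using es v by auto
      then obtain pre e where pe: "es = pre @ [e]" by (metis rev_exhaust)
      have p1: "is_path T src tgt r pre (src e)" and eT: "e \<in> T" and te: "tgt e = v"
        using es(1) unfolding pe is_path_append by auto
      have "d (src e) \<le> length pre" using dle[OF p1] .
      moreover have "is_path T src tgt r (pre' @ [e]) v" if "is_path T src tgt r pre' (src e)" for pre'
        using that eT te by (auto simp: is_path_append)
      moreover have "src e \<in> V" using Ebar eT TE by auto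
      ultimately have "d v \<le> d (src e) + 1" using dex dle by fastforce
      moreover have "d v = length pre + 1" using es pe by simp
      ultimately show "\<exists>e. e \<in> T \<and> tgt e = v \<and> d (src e) + 1 = d v"
        using eT te \<open>d (src e) \<le> length pre\<close> by (intro exI[of _ e]) auto
    qed
    then obtain f where f: "\<And>v. v \<in> W \<Longrightarrow> f v \<in> T \<and> tgt (f v) = v \<and> d (src (f v)) + 1 = d v"
      by metis
    have fE: "\<And>v. v \<in> W \<Longrightarrow> f v \<in> E" using f TE by auto
    have srcbar: "\<And>e. e \<in> E \<Longrightarrow> src (bar e) = tgt e" using Ebar by metis
    have finW: "finite W" using finV W_def by auto
    have injf: "inj_on f W" using f by (metis inj_onI)
    have injbar: "inj_on bar (f ` W)" using Ebar fE by (smt (verit) image_iff inj_onI)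
    have disj: "f ` W \<inter> bar ` f ` W = {}"
    proof (rule ccontr)
      assume "f ` W \<inter> bar ` f ` W \<noteq> {}"
      then obtain v w where v: "v \<in> W" and w: "w \<in> W" and eq: "f v = bar (f w)" by auto
      have "tgt (f v) = src (f w)" using eq Ebar fE w by auto
      hence "src (f w) = v" using f v by auto
      moreover have "src (f v) = w" using eq srcbar fE w f by auto
      moreover have "d (src (f w)) + 1 = d w" "d (src (f v)) + 1 = d v" using f v w by auto
      ultimately show False by simp
    qed
    have sub: "f ` W \<union> bar ` f ` W \<subseteq> E" using fE Ebar by auto
    have "(\<Sum>e\<in>E. b e - 1) \<ge> (\<Sum>e\<in>f ` W \<union> bar ` f ` W. b e - 1)"
      using sub b1 finE by (intro sum_mono2) auto
    also have "(\<Sum>e\<in>f ` W \<union> bar ` f ` W. b e - 1) = (\<Sum>e\<in>f ` W. b e - 1) + (\<Sum>e\<in>bar ` f ` W. b e - 1)"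
      using disj finW by (intro sum.union_disjoint) auto
    also have "(\<Sum>e\<in>bar ` f ` W. b e - 1) = (\<Sum>e\<in>f ` W. b (bar e) - 1)"
      using injbar by (simp add: sum.reindex)
    also have "\<dots> = (\<Sum>e\<in>f ` W. b e - 1)" using bbar fE by (intro sum.cong) auto
    also have "(\<Sum>e\<in>f ` W. b e - 1) = (\<Sum>v\<in>W. b (f v) - 1)" using injf by (simp add: sum.reindex)
    finally have s1: "(\<Sum>e\<in>E. b e - 1) \<ge> (\<Sum>v\<in>W. 2 * b (f v) - 2)"
      by (simp add: sum_subtractf sum_distrib_left[symmetric])
    have per: "\<And>v. v \<in> W \<Longrightarrow> 2 * b (f v) - 2 \<ge> 2 * a v + 2 * (a (src (f v)) - 1)"
    proof -
      fix v assume v: "v \<in> W"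
      have "b (f v) \<ge> 2 * a v" using bT f v by metis
      moreover have "b (f v) \<ge> 2 * a (src (f v))" using bT2 f v by metis
      moreover have "a v \<ge> 1" using a1 v W_def by auto
      ultimately show "2 * b (f v) - 2 \<ge> 2 * a v + 2 * (a (src (f v)) - 1)"
        by (smt (verit))
    qed
    have "Min (d ` W) \<in> d ` W" using False finW by (intro Min_in) auto
    then obtain c where c: "c \<in> W" "d c = Min (d ` W)" by auto
    have "src (f c) = r"
    proof (rule ccontr)
      assume ne: "src (f c) \<noteq> r"
      have "src (f c) \<in> V" using Ebar fE c by auto
      hence "src (f c) \<in> W" using ne W_def by auto
      hence "d c \<le> d (src (f c))" using c finW by simp
      thus False using f c by fastforce
    qed
    have srcV: "\<And>v. v \<in> W \<Longrightarrow> src (f v) \<in> V" using Ebar fE by auto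
    have t1: "(\<Sum>v\<in>W. 2 * b (f v) - 2) \<ge> (\<Sum>v\<in>W. 2 * a v + 2 * (a (src (f v)) - 1))"
      using per by (intro sum_mono) auto
    have t2: "(\<Sum>v\<in>W. 2 * a v + 2 * (a (src (f v)) - 1)) = 2 * (\<Sum>v\<in>W. a v) + (\<Sum>v\<in>W. 2 * (a (src (f v)) - 1))"
      by (simp add: sum.distrib sum_distrib_left)
    have t3: "(\<Sum>v\<in>W. 2 * (a (src (f v)) - 1)) \<ge> 2 * (a (src (f c)) - 1)"
      using c finW a1 srcV by (intro member_le_sum) auto
    have "(\<Sum>v\<in>W. 2 * b (f v) - 2) \<ge> 2 * (\<Sum>v\<in>W. a v) + 2 * (a r - 1)"
      using t1 t2 t3 \<open>src (f c) = r\<close> by simp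
    moreover have "(\<Sum>v\<in>V. a v) = a r + (\<Sum>v\<in>W. a v)"
      unfolding W_def using finV r by (simp add: sum.remove)
    ultimately show ?thesis using s1 by (smt (verit))
  qed
  have "free_rank V E Gv Ge = 1 - (\<Sum>v\<in>V. a v) + (\<Sum>e\<in>E. b e) / 2"
    unfolding free_rank_def euler_char_def a_def b_def n_def k_def M_def[symmetric]
    by (simp add: right_diff_distrib sum_distrib_left)
  moreover have "(\<Sum>e\<in>E. b e - 1) = (\<Sum>e\<in>E. b e) - real (card E)"
    by (simp add: sum_subtractf)
  ultimately show ?thesis using key by linarith
qed
end
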